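(* Let $A_n(x,y,q,p,s)=\sum_{\sigma\in\mathfrak{S}_n}x^{\operatorname{wex}\sigma}y^{\operatorname{fix}\sigma}q^{\operatorname{cros}\sigma}p^{\operatorname{nest}\sigma}s^{\operatorname{inv}\sigma}$. Then, as formal power series in $t$, $$1+\sum_{n\ge1}A_n(x,y,q,p,s)\, t^n =\cfrac{1}{1-b_0t-\cfrac{a_0c_1t^2}{1-b_1t-\cfrac{a_1c_2t^2}{1-b_2t-\cfrac{a_2c_3t^2}{\ddots}}}},$$ where $a_h=x s^{2h+1} [h+1]_{q,ps}$, $b_h = xyp^h s^{2h} + (1+xq) s^h [h]_{q,ps}$, and $c_h= [h]_{q,ps}$.
   Context: $\mathfrak{S}_n$ is the set of permutations of $[n]$. For $\sigma\in\mathfrak{S}_n$: $\operatorname{wex}\sigma=\#\{i:\sigma_i\ge i\}$, $\operatorname{fix}\sigma=\#\{i:\sigma_i=i\}$, $\operatorname{cros}\sigma=\#\{(i,j): i<j\le\sigma_i<\sigma_j \text{ or } \sigma_i<\sigma_j<i<j\}$, $\operatorname{nest}\sigma=\#\{(i,j): i<j\le\sigma_j<\sigma_i \text{ or } \sigma_j<\sigma_i<i<j\}$, $\operatorname{inv}\sigma=\#\{(i,j):i<j,\ \sigma_i>\sigma_j\}$. For variables $a,b$ and $m\ge0$, $[m]_{a,b}=(a^m-b^m)/(a-b)=\sum_{i=0}^{m-1}a^ib^{m-1-i}$. *)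

theory Defs
  imports "HOL-Combinatorics.Permutations" "HOL-Computational_Algebra.Formal_Power_Series"
begin

definition wex :: "nat \<Rightarrow> (nat \<Rightarrow> nat) \<Rightarrow> nat" where
  "wex n \<sigma> = card {i \<in> {1..n}. \<sigma> i \<ge> i}"

definition fixcount :: "nat \<Rightarrow> (nat \<Rightarrow> nat) \<Rightarrow> nat" where
  "fixcount n \<sigma> = card {i \<in> {1..n}. \<sigma> i = i}"

definition cros :: "nat \<Rightarrow> (nat \<Rightarrow> nat) \<Rightarrow> nat" where
  "cros n \<sigma> = card {(i, j). i \<in> {1..n} \<and> j \<in> {1..n} \<and>
     ((i < j \<and> j \<le> \<sigma> i \<and> \<sigma> i < \<sigma> j) \<or> (\<sigma> i < \<sigma> j \<and> \<sigma> j < i \<and> i < j))}"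

definition nest :: "nat \<Rightarrow> (nat \<Rightarrow> nat) \<Rightarrow> nat" where
  "nest n \<sigma> = card {(i, j). i \<in> {1..n} \<and> j \<in> {1..n} \<and>
     ((i < j \<and> j \<le> \<sigma> j \<and> \<sigma> j < \<sigma> i) \<or> (\<sigma> j < \<sigma> i \<and> \<sigma> i < i \<and> i < j))}"

definition invs :: "nat \<Rightarrow> (nat \<Rightarrow> nat) \<Rightarrow> nat" where
  "invs n \<sigma> = card {(i, j). i \<in> {1..n} \<and> j \<in> {1..n} \<and> i < j \<and> \<sigma> i > \<sigma> j}"

definition A_poly :: "nat \<Rightarrow> 'a::comm_ring_1 \<Rightarrow> 'a \<Rightarrow> 'a \<Rightarrow> 'a \<Rightarrow> 'a \<Rightarrow> 'a" where
  "A_poly n x y q p s = (\<Sum>\<sigma> \<in> {\<sigma>. \<sigma> permutes {1..n}}.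
      x ^ wex n \<sigma> * y ^ fixcount n \<sigma> * q ^ cros n \<sigma> * p ^ nest n \<sigma> * s ^ invs n \<sigma>)"

definition qint :: "nat \<Rightarrow> 'a::comm_ring_1 \<Rightarrow> 'a \<Rightarrow> 'a" where
  "qint m a b = (\<Sum>i<m. a ^ i * b ^ (m - 1 - i))"

text \<open>Truncated J-fraction: jfrac a b c m k is the depth-m convergent of
  1/(1 - b_k t - a_k c_{k+1} t^2/(1 - b_{k+1} t - ...)), with the tail beyond depth m
  replaced by 0 (so depth 1 gives 1/(1 - b_k t)). The infinite J-fraction is the limit
  of the convergents in the X-adic topology of formal power series.\<close>

fun jfrac :: "(nat \<Rightarrow> 'a::field) \<Rightarrow> (nat \<Rightarrow> 'a) \<Rightarrow> (nat \<Rightarrow> 'a) \<Rightarrow> nat \<Rightarrow> nat \<Rightarrow> 'a fps" where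
  "jfrac a b c 0 k = 0"
| "jfrac a b c (Suc m) k = inverse (1 - fps_const (b k) * fps_X
      - fps_const (a k * c (Suc k)) * fps_X ^ 2 * jfrac a b c m (Suc k))"

end

theory Submission
  imports Defs
begin


fun TT :: "(nat \<Rightarrow> 'a::comm_ring_1) \<Rightarrow> (nat \<Rightarrow> 'a) \<Rightarrow> (nat \<Rightarrow> 'a) \<Rightarrow> nat \<Rightarrow> nat \<Rightarrow> nat \<Rightarrow> 'a" where
  "TT al be ga m 0 h = (if h = 0 \<and> h < m then 1 else 0)"
| "TT al be ga m (Suc n) h = (if h < m then
     (if h \<ge> 1 then al (h-1) * TT al be ga m n (h-1) else 0) + be h * TT al be ga m n h
      + (if h+1 < m then ga (h+1) * TT al be ga m n (h+1) else 0) else 0)"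

lemma TT_ge: "h \<ge> m \<Longrightarrow> TT al be ga m n h = 0"
  by (cases n) auto

definition XX where "XX al be ga m h = Abs_fps (\<lambda>n. TT al be ga m n h)"

lemma XX_ge: "h \<ge> m \<Longrightarrow> XX al be ga m h = 0"
  by (simp add: XX_def TT_ge fps_eq_iff)

lemma XX_eq:
  fixes al be ga :: "nat \<Rightarrow> 'a::comm_ring_1"
  assumes "h < m"
  shows "XX al be ga m h = (if h = 0 then 1 else 0) + fps_X * ((if h \<ge> 1 then fps_const (al (h-1)) * XX al be ga m (h-1) else 0)
     + fps_const (be h) * XX al be ga m h + fps_const (ga (h+1)) * XX al be ga m (h+1))"
proof (rule fps_ext)
  fix n show "fps_nth (XX al be ga m h) n = fps_nth ((if h = 0 then 1 else 0) + fps_X * ((if h \<ge> 1 then fps_const (al (h-1)) * XX al be ga m (h-1) else 0)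
     + fps_const (be h) * XX al be ga m h + fps_const (ga (h+1)) * XX al be ga m (h+1))) n"
  proof (cases n)
    case 0 then show ?thesis using assms by (simp add: XX_def fps_X_mult_nth)
  next
    case (Suc k) then show ?thesis using assms
      by (auto simp add: XX_def fps_X_mult_nth TT_ge)
  qed
qed

lemma jfrac_const0: "fps_nth (jfrac a b c (Suc m) k) 0 = 1"
  by simp

lemma XX_step:
  fixes al be ga :: "nat \<Rightarrow> 'a::field"
  assumes "h < m"
  shows "XX al be ga m (h+1) = fps_const (al h) * fps_X * jfrac al be ga (m - (h+1)) (h+1) * XX al be ga m h"
  using assms
proof (induction "m - h" arbitrary: h rule: less_induct)
  case less
  show ?case
  proof (cases "h + 1 = m")
    case True then show ?thesis by (simp add: XX_ge)
  next
    case False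
    then have h1: "h + 1 < m" using less by simp
    have IH: "XX al be ga m (h+2) = fps_const (al (h+1)) * fps_X * jfrac al be ga (m - (h+2)) (h+2) * XX al be ga m (h+1)"
      using less(1)[of "h+1"] h1 by simp
    define D where "D = 1 - fps_const (be (h+1)) * fps_X - fps_const (al (h+1) * ga (Suc (h+1))) * fps_X ^ 2 * jfrac al be ga (m - (h+2)) (Suc (h+1))"
    have mm: "m - (h+1) = Suc (m - (h+2))" using h1 by simp
    have J: "jfrac al be ga (m - (h+1)) (h+1) = inverse D"
      unfolding mm D_def by simp
    have D0: "fps_nth D 0 = 1" by (simp add: D_def)
    have eq: "XX al be ga m (h+1) = fps_X * (fps_const (al h) * XX al be ga m h
     + fps_const (be (h+1)) * XX al be ga m (h+1) + fps_const (ga (h+2)) * XX al be ga m (h+2))"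
      using XX_eq[OF h1, of al be ga] by (simp add: add.commute)
    have "XX al be ga m (h+1) * D = fps_X * fps_const (al h) * XX al be ga m h"
    proof -
      have "XX al be ga m (h+1) * D = XX al be ga m (h+1) - fps_X * fps_const (be (h+1)) * XX al be ga m (h+1)
           - fps_X * fps_const (ga (h+2)) * XX al be ga m (h+2)"
        unfolding D_def IH by (simp add: algebra_simps power2_eq_square fps_const_mult[symmetric] del: fps_const_mult)
      also have "\<dots> = fps_X * fps_const (al h) * XX al be ga m h"
        by (subst (1) eq) (simp add: algebra_simps)
      finally show ?thesis .
    qed
    then have "XX al be ga m (h+1) * (D * inverse D) = fps_X * fps_const (al h) * XX al be ga m h * inverse D" by (simp add: mult.assoc[symmetric])
    moreover have "D * inverse D = 1" using D0 by (intro inverse_mult_eq_1') simp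
    moreover have J': "jfrac al be ga (m - Suc h) (Suc h) = inverse D" using J by simp
    ultimately show ?thesis by (simp add: J' algebra_simps)
  qed
qed

lemma XX_0:
  fixes al be ga :: "nat \<Rightarrow> 'a::field"
  assumes "0 < m"
  shows "XX al be ga m 0 = jfrac al be ga m 0"
proof -
  obtain m' where mm: "m = Suc m'" using assms by (cases m) auto
  define D where "D = 1 - fps_const (be 0) * fps_X - fps_const (al 0 * ga (Suc 0)) * fps_X ^ 2 * jfrac al be ga m' (Suc 0)"
  have J: "jfrac al be ga m 0 = inverse D" unfolding mm D_def by simp
  have D0: "fps_nth D 0 = 1" by (simp add: D_def)
  have S: "XX al be ga m 1 = fps_const (al 0) * fps_X * jfrac al be ga m' 1 * XX al be ga m 0"
    using XX_step[OF assms, of al be ga] mm by simp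
  have eq: "XX al be ga m 0 = 1 + fps_X * (fps_const (be 0) * XX al be ga m 0 + fps_const (ga 1) * XX al be ga m 1)"
    using XX_eq[OF assms, of al be ga] by simp
  have "XX al be ga m 0 * D = 1"
  proof -
    have "XX al be ga m 0 * D = XX al be ga m 0 - fps_X * fps_const (be 0) * XX al be ga m 0
           - fps_X * fps_const (ga 1) * XX al be ga m 1"
      unfolding D_def S by (simp add: algebra_simps power2_eq_square fps_const_mult[symmetric] del: fps_const_mult)
    also have "\<dots> = 1" by (subst (1) eq) (simp add: algebra_simps)
    finally show ?thesis .
  qed
  then show ?thesis using D0 J fps_inverse_unique[of D "XX al be ga m 0"] by (simp add: mult.commute)
qed


definition pinj :: "nat \<Rightarrow> (nat\<times>nat) set \<Rightarrow> bool" where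
 "pinj n E \<longleftrightarrow> E \<subseteq> {1..n} \<times> {1..n} \<and> (\<forall>i j j'. (i,j)\<in>E \<longrightarrow> (i,j')\<in>E \<longrightarrow> j = j')
     \<and> (\<forall>i i' j. (i,j)\<in>E \<longrightarrow> (i',j)\<in>E \<longrightarrow> i = i')"
definition restr :: "nat \<Rightarrow> (nat\<times>nat) set \<Rightarrow> (nat\<times>nat) set" where
  "restr n E = E \<inter> ({1..n} \<times> {1..n})"
definition opo :: "nat \<Rightarrow> (nat\<times>nat) set \<Rightarrow> nat set" where "opo n E = {1..n} - fst ` E"
definition opi :: "nat \<Rightarrow> (nat\<times>nat) set \<Rightarrow> nat set" where "opi n E = {1..n} - snd ` E"

datatype ch = CF | CU | CI nat | CO nat | CD nat nat

definition chs :: "nat \<Rightarrow> (nat\<times>nat) set \<Rightarrow> ch set" where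
 "chs n E = {CF, CU} \<union> CI ` opo n E \<union> CO ` opi n E \<union> (\<lambda>(i,j). CD i j) ` (opo n E \<times> opi n E)"

fun mk :: "nat \<Rightarrow> (nat\<times>nat) set \<Rightarrow> ch \<Rightarrow> (nat\<times>nat) set" where
  "mk n E CF = insert (Suc n, Suc n) E"
| "mk n E CU = E"
| "mk n E (CI i) = insert (i, Suc n) E"
| "mk n E (CO j) = insert (Suc n, j) E"
| "mk n E (CD i j) = insert (i, Suc n) (insert (Suc n, j) E)"

lemma pinj_noSuc: "pinj n E \<Longrightarrow> (a,b) \<in> E \<Longrightarrow> a \<le> n \<and> b \<le> n \<and> 1 \<le> a \<and> 1 \<le> b"
  unfolding pinj_def by auto

lemma mk_pinj:
  assumes "pinj n E" "c \<in> chs n E"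
  shows "pinj (Suc n) (mk n E c)"
proof -
  have sub: "E \<subseteq> {1..n}\<times>{1..n}" and fu: "\<And>i j j'. (i,j)\<in>E \<Longrightarrow> (i,j')\<in>E \<Longrightarrow> j = j'"
    and iu: "\<And>i i' j. (i,j)\<in>E \<Longrightarrow> (i',j)\<in>E \<Longrightarrow> i = i'"
    using assms(1) unfolding pinj_def by blast+
  have sub': "E \<subseteq> {1..Suc n}\<times>{1..Suc n}" using sub by auto
  have nS: "\<And>a. (a, Suc n) \<notin> E" "\<And>a. (Suc n, a) \<notin> E" using sub by auto
  have oo: "\<And>i j. i \<in> opo n E \<Longrightarrow> (i,j) \<notin> E" unfolding opo_def by force
  have oi: "\<And>i j. j \<in> opi n E \<Longrightarrow> (i,j) \<notin> E" unfolding opi_def by force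
  have r: "\<And>i. i \<in> opo n E \<Longrightarrow> 1 \<le> i \<and> i \<le> n" "\<And>i. i \<in> opi n E \<Longrightarrow> 1 \<le> i \<and> i \<le> n"
    unfolding opo_def opi_def by auto
  show ?thesis
  proof (cases c)
    case CF then show ?thesis using sub' fu iu nS unfolding pinj_def by auto
  next
    case CU then show ?thesis using sub' fu iu unfolding pinj_def by auto
  next
    case (CI i) then have "i \<in> opo n E" using assms(2) unfolding chs_def by auto
    then show ?thesis using CI sub' fu iu nS oo[where i=i] r[of i] unfolding pinj_def by auto
  next
    case (CO j) then have "j \<in> opi n E" using assms(2) unfolding chs_def by auto
    then show ?thesis using CO sub' fu iu nS oi[where j=j] r[of j] unfolding pinj_def by auto
  next
    case (CD i j) then have "i \<in> opo n E" "j \<in> opi n E" using assms(2) unfolding chs_def by auto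
    then show ?thesis using CD sub' fu iu nS oo[where i=i] oi[where j=j] r[of i] r[of j] unfolding pinj_def by auto
  qed
qed

lemma mk_restr:
  assumes "pinj n E" "c \<in> chs n E"
  shows "restr n (mk n E c) = E"
  using assms pinj_noSuc[OF assms(1)]
  unfolding chs_def restr_def opo_def opi_def
  by (cases c) auto

lemma restr_pinj: "pinj (Suc n) E' \<Longrightarrow> pinj n (restr n E')"
  unfolding pinj_def restr_def by auto

lemma mk_surj:
  assumes "pinj (Suc n) E'"
  shows "E' \<in> mk n (restr n E') ` chs n (restr n E')"
proof -
  define E where "E = restr n E'"
  define m where "m = Suc n"
  have sub: "E' \<subseteq> {1..m}\<times>{1..m}" and fu: "\<And>i j j'. (i,j)\<in>E' \<Longrightarrow> (i,j')\<in>E' \<Longrightarrow> j = j'"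
    and iu: "\<And>i i' j. (i,j)\<in>E' \<Longrightarrow> (i',j)\<in>E' \<Longrightarrow> i = i'"
    using assms unfolding pinj_def m_def by blast+
  have E'eq: "E' = E \<union> {pr \<in> E'. fst pr = m \<or> snd pr = m}"
    using sub unfolding E_def restr_def m_def by auto
  show ?thesis
  proof (cases "(m,m) \<in> E'")
    case True
    have "{pr \<in> E'. fst pr = m \<or> snd pr = m} = {(m,m)}"
      using True fu iu by auto
    then have "E' = mk n E CF" using E'eq by (simp add: m_def)
    then show ?thesis unfolding E_def chs_def by blast
  next
    case nf: False
    show ?thesis
    proof (cases "\<exists>i. (i,m) \<in> E'")
      case True
      then obtain i where i: "(i,m) \<in> E'" by blast
      have ilt: "i < m" "1 \<le> i" using i sub nf by (auto simp: le_less)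
      have io: "i \<in> opo n E" using i ilt fu unfolding opo_def E_def restr_def m_def by force
      show ?thesis
      proof (cases "\<exists>j. (m,j) \<in> E'")
        case True
        then obtain j where j: "(m,j) \<in> E'" by blast
        have jlt: "j < m" "1 \<le> j" using j sub nf by (auto simp: le_less)
        have jo: "j \<in> opi n E" using j jlt iu unfolding opi_def E_def restr_def m_def by force
        have "{pr \<in> E'. fst pr = m \<or> snd pr = m} = {(i,m),(m,j)}"
          using i j fu iu by auto
        then have "E' = mk n E (CD i j)" using E'eq by (auto simp: m_def)
        then show ?thesis using io jo unfolding E_def chs_def by blast
      next
        case False
        have "{pr \<in> E'. fst pr = m \<or> snd pr = m} = {(i,m)}"
          using i False fu iu by auto
        then have "E' = mk n E (CI i)" using E'eq by (auto simp: m_def)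
        then show ?thesis using io unfolding E_def chs_def by blast
      qed
    next
      case nI: False
      show ?thesis
      proof (cases "\<exists>j. (m,j) \<in> E'")
        case True
        then obtain j where j: "(m,j) \<in> E'" by blast
        have jlt: "j < m" "1 \<le> j" using j sub nf by (auto simp: le_less)
        have jo: "j \<in> opi n E" using j jlt iu unfolding opi_def E_def restr_def m_def by force
        have "{pr \<in> E'. fst pr = m \<or> snd pr = m} = {(m,j)}"
          using j nI fu iu by auto
        then have "E' = mk n E (CO j)" using E'eq by (auto simp: m_def)
        then show ?thesis using jo unfolding E_def chs_def by blast
      next
        case False
        have "{pr \<in> E'. fst pr = m \<or> snd pr = m} = {}"
          using nI False by auto
        then have "E' = mk n E CU" using E'eq by (auto simp: m_def)
        then show ?thesis unfolding E_def chs_def by blast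
      qed
    qed
  qed
qed

lemma mk_inj:
  assumes "pinj n E"
  shows "inj_on (mk n E) (chs n E)"
proof
  fix c d assume c: "c \<in> chs n E" and d: "d \<in> chs n E" and eq: "mk n E c = mk n E d"
  have nS: "\<And>a. (a, Suc n) \<notin> E" "\<And>a. (Suc n, a) \<notin> E" using pinj_noSuc[OF assms] by fastforce+
  have oS: "Suc n \<notin> opo n E" "Suc n \<notin> opi n E" by (auto simp: opo_def opi_def)
  show "c = d"
    using c d eq nS oS unfolding chs_def
    apply (cases c; cases d)
    apply (simp_all add: image_iff)
    apply (metis insertCI insertE prod.inject)+
    done
qed


definition abv :: "nat set \<Rightarrow> nat \<Rightarrow> nat" where "abv S i = card {a\<in>S. i < a}"
definition blw :: "nat set \<Rightarrow> nat \<Rightarrow> nat" where "blw S i = card {a\<in>S. a < i}"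

definition loc :: "'a \<Rightarrow> 'a \<Rightarrow> 'a \<Rightarrow> 'a \<Rightarrow> 'a \<Rightarrow> nat \<Rightarrow> (nat\<times>nat) set \<Rightarrow> 'a::comm_ring_1" where
 "loc x y q p s m E' = (let n = m - 1; E = restr n E'; Oo = opo n E; Ii = opi n E; h = card Oo;
    hin = (\<exists>i. (i,m)\<in>E'); hout = (\<exists>j. (m,j)\<in>E');
    i = (THE i. (i,m)\<in>E'); j = (THE j. (m,j)\<in>E');
    we = (if hout \<and> j < m then 0 else 1);
    fe = (if (m,m)\<in>E' then 1 else 0);
    ce = (if hin \<and> i < m then abv Oo i + (if hout then 0 else 1) else 0) + (if hout \<and> j < m then abv Ii j else 0);
    ne = (if hin then blw Oo i else 0) + (if hout \<and> j < m then blw Ii j else 0);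
    ie = (if hout then blw Ii j else h + (if hin then 0 else 1)) + (if hin then blw Oo i else h)
   in x^we * y^fe * q^ce * p^ne * s^ie)"

lemma card_opo_opi:
  assumes "pinj n E" shows "card (opo n E) = card (opi n E)"
proof -
  have sub: "E \<subseteq> {1..n}\<times>{1..n}" using assms unfolding pinj_def by blast
  have fin: "finite E" using sub finite_subset by blast
  have "inj_on fst E" using assms unfolding pinj_def inj_on_def by auto
  then have c1: "card (fst ` E) = card E" by (rule card_image)
  have "inj_on snd E" using assms unfolding pinj_def inj_on_def by auto
  then have c2: "card (snd ` E) = card E" by (rule card_image)
  have s1: "fst ` E \<subseteq> {1..n}" "snd ` E \<subseteq> {1..n}" using sub by auto
  show ?thesis unfolding opo_def opi_def
    using c1 c2 s1 by (simp add: card_Diff_subset finite_subset)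
qed

lemma opo_fin: "finite (opo n E)" "finite (opi n E)" by (auto simp: opo_def opi_def)
lemma opo_lt: "a \<in> opo n E \<Longrightarrow> a < Suc n \<and> 1 \<le> a" by (auto simp: opo_def opi_def)
lemma opi_lt: "a \<in> opi n E \<Longrightarrow> a < Suc n \<and> 1 \<le> a" by (auto simp: opo_def opi_def)

lemma loc_alt:
  assumes "(\<exists>i. (i,m)\<in>E') = HI" "(\<exists>j. (m,j)\<in>E') = HO" "(THE i. (i,m)\<in>E') = IX" "(THE j. (m,j)\<in>E') = JX"
    "restr (m-1) E' = E" "((m,m)\<in>E') = F"
  shows "loc x y q p s m E' = x^(if HO \<and> JX < m then 0 else 1) * y^(if F then 1 else 0) *
     q^((if HI \<and> IX < m then abv (opo (m-1) E) IX + (if HO then 0 else 1) else 0) + (if HO \<and> JX < m then abv (opi (m-1) E) JX else 0))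
   * p^((if HI then blw (opo (m-1) E) IX else 0) + (if HO \<and> JX < m then blw (opi (m-1) E) JX else 0))
   * s^((if HO then blw (opi (m-1) E) JX else card (opo (m-1) E) + (if HI then 0 else 1)) + (if HI then blw (opo (m-1) E) IX else card (opo (m-1) E)))"
  unfolding loc_def Let_def assms by simp

lemma blw_all: "finite S \<Longrightarrow> (\<And>a. a \<in> S \<Longrightarrow> a < m) \<Longrightarrow> blw S m = card S"
  unfolding blw_def by (rule arg_cong[where f=card]) auto

context
  fixes x y q p s :: "'a::comm_ring_1" and n :: nat and E
  assumes pE: "pinj n E"
begin

private lemma nS: "(a, Suc n) \<notin> E" "(Suc n, a) \<notin> E" using pinj_noSuc[OF pE] by fastforce+
private lemma restrE: "restr n E = E" using pE unfolding pinj_def restr_def by blast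

lemma loc_CF: "loc x y q p s (Suc n) (mk n E CF) = x*y*p^card (opo n E)*s^(2*card (opo n E))"
proof -
  have r: "restr n (insert (Suc n, Suc n) E) = E" using restrE by (auto simp: restr_def)
  have t1: "(THE i. (i, Suc n) \<in> insert (Suc n, Suc n) E) = Suc n" using nS by auto
  have t2: "(THE j. (Suc n, j) \<in> insert (Suc n, Suc n) E) = Suc n" using nS by auto
  have b1: "blw (opo n E) (Suc n) = card (opo n E)" by (rule blw_all) (auto simp: opo_fin opo_lt opi_lt)
  have b2: "blw (opi n E) (Suc n) = card (opo n E)" using card_opo_opi[OF pE] by (subst blw_all) (auto simp: opo_fin opo_lt opi_lt)
  show ?thesis
    by (subst loc_alt[where HI=True and HO=True and IX="Suc n" and JX="Suc n" and E=E and F=True])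
       (use r t1 t2 b1 b2 in \<open>auto simp: mult_2 power_add\<close>)
qed

lemma loc_CU: "loc x y q p s (Suc n) (mk n E CU) = x*s^(2*card (opo n E)+1)"
  by (subst loc_alt[where HI=False and HO=False and IX="THE i::nat. False" and JX="THE i::nat. False" and E=E and F=False])
     (use restrE nS in \<open>auto simp: mult_2\<close>)

lemma loc_CI: "i \<in> opo n E \<Longrightarrow> loc x y q p s (Suc n) (mk n E (CI i)) =
   x * q^(abv (opo n E) i + 1) * p^(blw (opo n E) i) * s^(card (opo n E) + blw (opo n E) i)"
proof -
  assume i: "i \<in> opo n E"
  have il: "i < Suc n" using opo_lt[OF i] by simp
  have r: "restr n (insert (i, Suc n) E) = E" using restrE by (auto simp: restr_def)
  have t1: "(THE a. (a, Suc n) \<in> insert (i, Suc n) E) = i" using nS by auto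
  have t2: "\<not> (\<exists>j. (Suc n, j) \<in> insert (i, Suc n) E)" using nS il by auto
  show ?thesis
    by (subst loc_alt[where HI=True and HO=False and IX=i and JX="THE i::nat. False" and E=E and F=False])
       (use r t1 t2 il nS in \<open>auto simp: algebra_simps\<close>)
qed

lemma loc_CO: "j \<in> opi n E \<Longrightarrow> loc x y q p s (Suc n) (mk n E (CO j)) =
   q^(abv (opi n E) j) * p^(blw (opi n E) j) * s^(blw (opi n E) j + card (opo n E))"
proof -
  assume j: "j \<in> opi n E"
  have jl: "j < Suc n" using opi_lt[OF j] by simp
  have r: "restr n (insert (Suc n, j) E) = E" using restrE by (auto simp: restr_def)
  have t1: "(THE a. (Suc n, a) \<in> insert (Suc n, j) E) = j" using nS by auto
  have t2: "\<not> (\<exists>i. (i, Suc n) \<in> insert (Suc n, j) E)" using nS jl by auto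
  show ?thesis
    by (subst loc_alt[where HI=False and HO=True and IX="THE i::nat. False" and JX=j and E=E and F=False])
       (use r t1 t2 jl nS in \<open>auto simp: algebra_simps\<close>)
qed

lemma loc_CD: "i \<in> opo n E \<Longrightarrow> j \<in> opi n E \<Longrightarrow> loc x y q p s (Suc n) (mk n E (CD i j)) =
   q^(abv (opo n E) i + abv (opi n E) j) * p^(blw (opo n E) i + blw (opi n E) j) * s^(blw (opi n E) j + blw (opo n E) i)"
proof -
  assume i: "i \<in> opo n E" and j: "j \<in> opi n E"
  have il: "i < Suc n" using opo_lt[OF i] by simp
  have jl: "j < Suc n" using opi_lt[OF j] by simp
  have r: "restr n (insert (i, Suc n) (insert (Suc n, j) E)) = E" using restrE il jl by (auto simp: restr_def)
  have t1: "(THE a. (a, Suc n) \<in> insert (i, Suc n) (insert (Suc n, j) E)) = i" using nS jl by auto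
  have t2: "(THE a. (Suc n, a) \<in> insert (i, Suc n) (insert (Suc n, j) E)) = j" using nS il by auto
  show ?thesis
    by (subst loc_alt[where HI=True and HO=True and IX=i and JX=j and E=E and F=False])
       (use r t1 t2 il jl nS in \<open>auto simp: algebra_simps\<close>)
qed

end


lemma qint_Suc: "qint (Suc k) q r = r^k + q * qint k q r"
proof -
  have "qint (Suc k) q r = (\<Sum>i<Suc k. q^i * r^(k - i))" by (simp add: qint_def)
  also have "\<dots> = r^k + (\<Sum>i<k. q^(Suc i) * r^(k - Suc i))" by (subst sum.lessThan_Suc_shift) simp
  also have "\<dots> = r^k + q * qint k q r" by (simp add: qint_def sum_distrib_left mult.assoc)
  finally show ?thesis .
qed

lemma rank_sum:
  fixes q r :: "'a::comm_ring_1"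
  shows "finite S \<Longrightarrow> (\<Sum>i\<in>S. q^(abv S i) * r^(blw S i)) = qint (card S) q r"
proof (induction "card S" arbitrary: S)
  case 0 then show ?case by (simp add: qint_def)
next
  case (Suc k)
  then have ne: "S \<noteq> {}" by auto
  define M where "M = Max S"
  have M: "M \<in> S" using Suc ne M_def by simp
  have Mmax: "\<And>a. a \<in> S \<Longrightarrow> a \<le> M" using Suc M_def by simp
  define S' where "S' = S - {M}"
  have fS': "finite S'" "card S' = k" using Suc M by (auto simp: S'_def)
  have IH: "(\<Sum>i\<in>S'. q^(abv S' i) * r^(blw S' i)) = qint k q r" using Suc fS' by simp
  have a1: "abv S i = Suc (abv S' i)" if "i \<in> S'" for i
  proof -
    have "{a\<in>S. i < a} = insert M {a\<in>S'. i < a}" using that M Mmax by (auto simp: S'_def less_le)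
    then show ?thesis using fS' by (simp add: abv_def S'_def)
  qed
  have b1: "blw S i = blw S' i" if "i \<in> S'" for i
  proof -
    have "{a\<in>S. a < i} = {a\<in>S'. a < i}" using that M Mmax by (auto simp: S'_def) (meson leD)
    then show ?thesis by (simp add: blw_def)
  qed
  have aM: "abv S M = 0" using Mmax Suc by (auto simp: abv_def not_less[symmetric])
  have bM: "blw S M = k"
  proof -
    have "{a\<in>S. a < M} = S'" using Mmax by (auto simp: S'_def less_le)
    then show ?thesis using fS' by (simp add: blw_def)
  qed
  have "(\<Sum>i\<in>S. q^(abv S i) * r^(blw S i)) = q^(abv S M) * r^(blw S M) + (\<Sum>i\<in>S'. q^(abv S i) * r^(blw S i))"
    using Suc M by (simp add: S'_def sum.remove)
  also have "\<dots> = r^k + q * (\<Sum>i\<in>S'. q^(abv S' i) * r^(blw S' i))"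
    using aM bM a1 b1 by (simp add: sum_distrib_left mult.assoc)
  also have "\<dots> = qint (Suc k) q r"
    unfolding IH qint_Suc by simp
  finally show ?case using Suc by simp
qed

lemma sum_chs:
  assumes "pinj n E"
  shows "(\<Sum>c\<in>chs n E. f c) = f CF + f CU + (\<Sum>i\<in>opo n E. f (CI i)) + (\<Sum>j\<in>opi n E. f (CO j))
      + (\<Sum>i\<in>opo n E. \<Sum>j\<in>opi n E. f (CD i j))"
proof -
  have fin: "finite (opo n E)" "finite (opi n E)" by (rule opo_fin)+
  let ?A = "{CF, CU}" and ?B = "CI ` opo n E" and ?C = "CO ` opi n E" and ?D = "case_prod CD ` (opo n E \<times> opi n E)"
  have fA: "finite ?A" "finite ?B" "finite ?C" "finite ?D" using fin by auto
  have "(\<Sum>c\<in>chs n E. f c) = sum f (?A \<union> ?B \<union> ?C \<union> ?D)" unfolding chs_def by simp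
  also have "\<dots> = sum f (?A \<union> ?B \<union> ?C) + sum f ?D"
    by (rule sum.union_disjoint) (use fA in force)+
  also have "sum f (?A \<union> ?B \<union> ?C) = sum f (?A \<union> ?B) + sum f ?C"
    by (rule sum.union_disjoint) (use fA in force)+
  also have "sum f (?A \<union> ?B) = sum f ?A + sum f ?B"
    by (rule sum.union_disjoint) (use fA in force)+
  also have "sum f ?B = (\<Sum>i\<in>opo n E. f (CI i))" by (subst sum.reindex) (auto simp: inj_on_def)
  also have "sum f ?C = (\<Sum>i\<in>opi n E. f (CO i))" by (subst sum.reindex) (auto simp: inj_on_def)
  also have "sum f ?D = (\<Sum>(i,j)\<in>opo n E \<times> opi n E. f (CD i j))" by (subst sum.reindex) (auto simp: inj_on_def split_def)
  also have "\<dots> = (\<Sum>i\<in>opo n E. \<Sum>j\<in>opi n E. f (CD i j))" by (rule sum.cartesian_product[symmetric])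
  finally show ?thesis by simp
qed
definition Mt :: "'a \<Rightarrow> 'a \<Rightarrow> 'a \<Rightarrow> 'a \<Rightarrow> 'a \<Rightarrow> nat \<Rightarrow> nat \<Rightarrow> 'a::comm_ring_1" where
  "Mt x y q p s h h' = (if h' = Suc h then x * s^(2*h+1) else 0)
     + (if h' = h then x*y*p^h*s^(2*h) + (1 + x*q)*s^h*qint h q (p*s) else 0)
     + (if Suc h' = h then qint h q (p*s) * qint h q (p*s) else 0)"

context
  fixes x y q p s :: "'a::comm_ring_1" and n :: nat and E
  assumes pE: "pinj n E"
begin

private lemma fstE: "fst ` E \<subseteq> {1..n}" using pE unfolding pinj_def by auto

lemma ht_CF: "opo (Suc n) (mk n E CF) = opo n E" using fstE unfolding opo_def by auto
lemma ht_CU: "opo (Suc n) (mk n E CU) = insert (Suc n) (opo n E)" using fstE unfolding opo_def by auto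
lemma ht_CI: "i \<in> opo n E \<Longrightarrow> opo (Suc n) (mk n E (CI i)) = insert (Suc n) (opo n E - {i})" using fstE unfolding opo_def by auto
lemma ht_CO: "opo (Suc n) (mk n E (CO j)) = opo n E" using fstE unfolding opo_def by auto
lemma ht_CD: "opo (Suc n) (mk n E (CD i j)) = opo n E - {i}" using fstE unfolding opo_def by auto

lemma fiber_sum:
  "(\<Sum>c\<in>chs n E. if card (opo (Suc n) (mk n E c)) = h' then loc x y q p s (Suc n) (mk n E c) else 0)
    = Mt x y q p s (card (opo n E)) h'"
proof -
  let ?O = "opo n E" and ?I = "opi n E" and ?h = "card (opo n E)"
  have fin: "finite ?O" "finite ?I" by (rule opo_fin)+
  have nO: "Suc n \<notin> ?O" by (auto simp: opo_def)
  have cI: "card ?I = ?h" using card_opo_opi[OF pE] by simp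
  have RO: "(\<Sum>i\<in>?O. q^(abv ?O i) * (p*s)^(blw ?O i)) = qint ?h q (p*s)" by (rule rank_sum[OF fin(1)])
  have RI: "(\<Sum>i\<in>?I. q^(abv ?I i) * (p*s)^(blw ?I i)) = qint ?h q (p*s)" using rank_sum[OF fin(2)] cI by simp
  have sCF: "(if card (opo (Suc n) (mk n E CF)) = h' then loc x y q p s (Suc n) (mk n E CF) else 0)
     = (if h' = ?h then x*y*p^?h*s^(2*?h) else 0)" using ht_CF loc_CF[OF pE, of x y q p s] by auto
  have sCU: "(if card (opo (Suc n) (mk n E CU)) = h' then loc x y q p s (Suc n) (mk n E CU) else 0)
     = (if h' = Suc ?h then x * s^(2*?h+1) else 0)" using ht_CU loc_CU[OF pE, of x y q p s] fin nO by auto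
  have sCI: "(\<Sum>i\<in>?O. if card (opo (Suc n) (mk n E (CI i))) = h' then loc x y q p s (Suc n) (mk n E (CI i)) else 0)
     = (if h' = ?h then x*q*s^?h*qint ?h q (p*s) else 0)"
  proof -
    have "(\<Sum>i\<in>?O. if card (opo (Suc n) (mk n E (CI i))) = h' then loc x y q p s (Suc n) (mk n E (CI i)) else 0)
       = (\<Sum>i\<in>?O. if h' = ?h then x*q*s^?h*(q^(abv ?O i) * (p*s)^(blw ?O i)) else 0)"
    proof (rule sum.cong[OF refl])
      fix i assume i: "i \<in> ?O"
      have c1: "card (opo n E - {i}) = ?h - 1" using i fin by (simp add: card_Diff_singleton)
      have c2: "?h > 0" using i fin card_gt_0_iff by blast
      have c3: "Suc n \<notin> opo n E - {i}" "finite (opo n E - {i})" using nO fin by auto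
      have c: "card (opo (Suc n) (mk n E (CI i))) = ?h"
        unfolding ht_CI[OF i] using c1 c2 c3 card_insert_disjoint[OF c3(2) c3(1)] by simp
      show "(if card (opo (Suc n) (mk n E (CI i))) = h' then loc x y q p s (Suc n) (mk n E (CI i)) else 0)
        = (if h' = ?h then x*q*s^?h*(q^(abv ?O i) * (p*s)^(blw ?O i)) else 0)"
      proof -
        have "x * q^(abv ?O i + 1) * p^(blw ?O i) * s^(?h + blw ?O i) = x*q*s^?h*(q^(abv ?O i) * (p*s)^(blw ?O i))"
          by (simp add: power_add power_mult_distrib mult_ac)
        then show ?thesis using c loc_CI[OF pE i, of x y q p s] by simp
      qed
    qed
    also have "\<dots> = (if h' = ?h then x*q*s^?h*qint ?h q (p*s) else 0)"
      using RO by (simp add: sum_distrib_left[symmetric])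
    finally show ?thesis .
  qed
  have sCO: "(\<Sum>j\<in>?I. if card (opo (Suc n) (mk n E (CO j))) = h' then loc x y q p s (Suc n) (mk n E (CO j)) else 0)
     = (if h' = ?h then s^?h*qint ?h q (p*s) else 0)"
  proof -
    have "(\<Sum>j\<in>?I. if card (opo (Suc n) (mk n E (CO j))) = h' then loc x y q p s (Suc n) (mk n E (CO j)) else 0)
       = (\<Sum>j\<in>?I. if h' = ?h then s^?h*(q^(abv ?I j) * (p*s)^(blw ?I j)) else 0)"
    proof (rule sum.cong[OF refl])
      fix j assume j: "j \<in> ?I"
      show "(if card (opo (Suc n) (mk n E (CO j))) = h' then loc x y q p s (Suc n) (mk n E (CO j)) else 0)
        = (if h' = ?h then s^?h*(q^(abv ?I j) * (p*s)^(blw ?I j)) else 0)"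
      proof -
        have "q^(abv ?I j) * p^(blw ?I j) * s^(blw ?I j + ?h) = s^?h*(q^(abv ?I j) * (p*s)^(blw ?I j))"
          by (simp add: power_add power_mult_distrib mult_ac)
        then show ?thesis using ht_CO loc_CO[OF pE j, of x y q p s] by simp
      qed
    qed
    also have "\<dots> = (if h' = ?h then s^?h*qint ?h q (p*s) else 0)"
      using RI by (simp add: sum_distrib_left[symmetric])
    finally show ?thesis .
  qed
  have sCD: "(\<Sum>i\<in>?O. \<Sum>j\<in>?I. if card (opo (Suc n) (mk n E (CD i j))) = h' then loc x y q p s (Suc n) (mk n E (CD i j)) else 0)
     = (if Suc h' = ?h then qint ?h q (p*s) * qint ?h q (p*s) else 0)"
  proof -
    have "(\<Sum>i\<in>?O. \<Sum>j\<in>?I. if card (opo (Suc n) (mk n E (CD i j))) = h' then loc x y q p s (Suc n) (mk n E (CD i j)) else 0)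
       = (\<Sum>i\<in>?O. \<Sum>j\<in>?I. if Suc h' = ?h then (q^(abv ?O i) * (p*s)^(blw ?O i)) * (q^(abv ?I j) * (p*s)^(blw ?I j)) else 0)"
    proof (intro sum.cong[OF refl])
      fix i j assume i: "i \<in> ?O" and j: "j \<in> ?I"
      have c: "card (opo (Suc n) (mk n E (CD i j))) = ?h - 1" using i fin unfolding ht_CD by (simp add: card_Diff_singleton)
      have hp: "?h \<ge> 1" using i fin card_gt_0_iff by (metis One_nat_def Suc_leI empty_iff)
      show "(if card (opo (Suc n) (mk n E (CD i j))) = h' then loc x y q p s (Suc n) (mk n E (CD i j)) else 0)
        = (if Suc h' = ?h then (q^(abv ?O i) * (p*s)^(blw ?O i)) * (q^(abv ?I j) * (p*s)^(blw ?I j)) else 0)"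
      proof -
        have "q^(abv ?O i + abv ?I j) * p^(blw ?O i + blw ?I j) * s^(blw ?I j + blw ?O i) = (q^(abv ?O i) * (p*s)^(blw ?O i)) * (q^(abv ?I j) * (p*s)^(blw ?I j))"
          by (simp add: power_add power_mult_distrib mult_ac)
        moreover have "(?h - 1 = h') = (Suc h' = ?h)" using hp by auto
        ultimately show ?thesis using c loc_CD[OF pE i j, of x y q p s] by simp
      qed
    qed
    also have "\<dots> = (if Suc h' = ?h then qint ?h q (p*s) * qint ?h q (p*s) else 0)"
      using RO RI by (simp add: sum_distrib_left[symmetric] sum_distrib_right[symmetric])
    finally show ?thesis .
  qed
  show ?thesis
    unfolding sum_chs[OF pE] sCF sCU sCI sCO sCD Mt_def by (simp add: algebra_simps)
qed

end


definition PA :: "nat \<Rightarrow> (nat\<times>nat) set set" where "PA n = {E. pinj n E}"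

lemma PA_fin: "finite (PA n)"
  by (rule finite_subset[of _ "Pow ({1..n}\<times>{1..n})"]) (auto simp: PA_def pinj_def)

fun WW :: "'a \<Rightarrow> 'a \<Rightarrow> 'a \<Rightarrow> 'a \<Rightarrow> 'a \<Rightarrow> nat \<Rightarrow> (nat\<times>nat) set \<Rightarrow> 'a::comm_ring_1" where
  "WW x y q p s 0 E = 1"
| "WW x y q p s (Suc n) E = WW x y q p s n (restr n E) * loc x y q p s (Suc n) E"

definition GG :: "'a \<Rightarrow> 'a \<Rightarrow> 'a \<Rightarrow> 'a \<Rightarrow> 'a \<Rightarrow> nat \<Rightarrow> nat \<Rightarrow> 'a::comm_ring_1" where
  "GG x y q p s n h = (\<Sum>E\<in>PA n. if card (opo n E) = h then WW x y q p s n E else 0)"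

definition al :: "'a \<Rightarrow> 'a \<Rightarrow> nat \<Rightarrow> 'a::comm_ring_1" where "al x s h = x * s^(2*h+1)"
definition be :: "'a \<Rightarrow> 'a \<Rightarrow> 'a \<Rightarrow> 'a \<Rightarrow> 'a \<Rightarrow> nat \<Rightarrow> 'a::comm_ring_1" where
  "be x y q p s h = x*y*p^h*s^(2*h) + (1 + x*q)*s^h*qint h q (p*s)"
definition ga :: "'a \<Rightarrow> 'a \<Rightarrow> 'a \<Rightarrow> nat \<Rightarrow> 'a::comm_ring_1" where "ga q p s h = qint h q (p*s) * qint h q (p*s)"

lemma fiber_set:
  assumes pE: "pinj n E"
  shows "{E'\<in>PA (Suc n). restr n E' = E} = mk n E ` chs n E"
proof
  show "{E'\<in>PA (Suc n). restr n E' = E} \<subseteq> mk n E ` chs n E"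
    using mk_surj by (auto simp: PA_def)
  show "mk n E ` chs n E \<subseteq> {E'\<in>PA (Suc n). restr n E' = E}"
    using mk_pinj[OF pE] mk_restr[OF pE] by (auto simp: PA_def)
qed

lemma Mt_split:
  "w * Mt x y q p s h h' = (if h' \<ge> 1 then al x s (h'-1) * (if h = h'-1 then w else 0) else 0)
     + be x y q p s h' * (if h = h' then w else 0) + ga q p s (h'+1) * (if h = h'+1 then w else 0)"
  unfolding Mt_def al_def be_def ga_def
  by (cases "h' = Suc h"; cases "h' = h"; cases "Suc h' = h") (auto simp: algebra_simps)

lemma GG_Suc:
  "GG x y q p s (Suc n) h' = (if h' \<ge> 1 then al x s (h'-1) * GG x y q p s n (h'-1) else 0)
   + be x y q p s h' * GG x y q p s n h' + ga q p s (h'+1) * GG x y q p s n (h'+1)"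
proof -
  let ?f = "\<lambda>E'. if card (opo (Suc n) E') = h' then WW x y q p s (Suc n) E' else 0"
  have "GG x y q p s (Suc n) h' = (\<Sum>E'\<in>PA (Suc n). ?f E')" by (simp add: GG_def)
  also have "\<dots> = (\<Sum>E\<in>PA n. \<Sum>E'\<in>{E'\<in>PA (Suc n). restr n E' = E}. ?f E')"
    by (rule sum.group[symmetric]) (simp_all add: PA_fin, auto simp: PA_def restr_pinj)
  also have "\<dots> = (\<Sum>E\<in>PA n. WW x y q p s n E * Mt x y q p s (card (opo n E)) h')"
  proof (rule sum.cong[OF refl])
    fix E assume "E \<in> PA n" then have pE: "pinj n E" by (simp add: PA_def)
    have "(\<Sum>E'\<in>{E'\<in>PA (Suc n). restr n E' = E}. ?f E') = (\<Sum>c\<in>chs n E. ?f (mk n E c))"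
      unfolding fiber_set[OF pE] by (rule sum.reindex[OF mk_inj[OF pE], unfolded comp_def])
    also have "\<dots> = (\<Sum>c\<in>chs n E. WW x y q p s n E * (if card (opo (Suc n) (mk n E c)) = h' then loc x y q p s (Suc n) (mk n E c) else 0))"
      using mk_restr[OF pE] by (intro sum.cong) auto
    also have "\<dots> = WW x y q p s n E * Mt x y q p s (card (opo n E)) h'"
      by (simp add: sum_distrib_left[symmetric] fiber_sum[OF pE])
    finally show "(\<Sum>E'\<in>{E'\<in>PA (Suc n). restr n E' = E}. ?f E') = WW x y q p s n E * Mt x y q p s (card (opo n E)) h'" .
  qed
  also have "\<dots> = (if h' \<ge> 1 then al x s (h'-1) * GG x y q p s n (h'-1) else 0)
   + be x y q p s h' * GG x y q p s n h' + ga q p s (h'+1) * GG x y q p s n (h'+1)"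
    unfolding Mt_split GG_def by (simp add: sum.distrib sum_distrib_left)
  finally show ?thesis .
qed

lemma PA0: "PA 0 = {{}}" by (auto simp: PA_def pinj_def)

lemma GG_0: "GG x y q p s 0 h = (if h = 0 then 1 else 0)"
  by (simp add: GG_def PA0 opo_def)

lemma GG_TT: "n + h < m \<Longrightarrow> GG x y q p s n h = TT (al x s) (be x y q p s) (ga q p s) m n h"
proof (induction n arbitrary: h)
  case 0 then show ?case by (simp add: GG_0 TT.simps)
next
  case (Suc n)
  have h1: "n + h < m" "n + (h+1) < m" "h < m" "h + 1 < m" using Suc.prems by auto
  have h2: "h \<ge> 1 \<Longrightarrow> n + (h-1) < m" using Suc.prems by auto
  show ?case
    using Suc.IH[OF h1(1)] Suc.IH[OF h1(2)] Suc.IH[OF h2] h1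
    by (simp add: GG_Suc)
qed


definition gr :: "nat \<Rightarrow> (nat \<Rightarrow> nat) \<Rightarrow> (nat\<times>nat) set" where
  "gr N \<sigma> = (\<lambda>i. (i, \<sigma> i)) ` {1..N}"

lemma loc_alt2:
  assumes "(\<exists>i. (i,m)\<in>E') = HI" "(\<exists>j. (m,j)\<in>E') = HO" "HI \<Longrightarrow> (THE i. (i,m)\<in>E') = IX" "HO \<Longrightarrow> (THE j. (m,j)\<in>E') = JX"
    "restr (m-1) E' = E" "((m,m)\<in>E') = F"
  shows "loc x y q p s m E' = x^(if HO \<and> JX < m then 0 else 1) * y^(if F then 1 else 0) *
     q^((if HI \<and> IX < m then abv (opo (m-1) E) IX + (if HO then 0 else 1) else 0) + (if HO \<and> JX < m then abv (opi (m-1) E) JX else 0))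
   * p^((if HI then blw (opo (m-1) E) IX else 0) + (if HO \<and> JX < m then blw (opi (m-1) E) JX else 0))
   * s^((if HO then blw (opi (m-1) E) JX else card (opo (m-1) E) + (if HI then 0 else 1)) + (if HI then blw (opo (m-1) E) IX else card (opo (m-1) E)))"
  using assms unfolding loc_def Let_def by (cases HI; cases HO) simp_all

locale pm =
  fixes N :: nat and \<sigma> :: "nat \<Rightarrow> nat"
  assumes pm: "\<sigma> permutes {1..N}"
begin

lemma sinv[simp]: "\<sigma> (inv \<sigma> v) = v" "inv \<sigma> (\<sigma> i) = i"
  using permutes_inverses[OF pm] by auto

lemma seq[simp]: "\<sigma> a = \<sigma> b \<longleftrightarrow> a = b"
  using permutes_inj[OF pm] by (auto simp: inj_eq)

lemma seq_inv: "\<sigma> a = v \<longleftrightarrow> a = inv \<sigma> v"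
  using permutes_inv_eq[OF pm] by auto

lemma sS: "1 \<le> i \<Longrightarrow> i \<le> N \<Longrightarrow> 1 \<le> \<sigma> i \<and> \<sigma> i \<le> N"
  using permutes_in_image[OF pm, of i] by auto

lemma iS: "1 \<le> v \<Longrightarrow> v \<le> N \<Longrightarrow> 1 \<le> inv \<sigma> v \<and> inv \<sigma> v \<le> N"
  using permutes_in_image[OF permutes_inv[OF pm], of v] by auto

lemma sout: "\<not> (1 \<le> i \<and> i \<le> N) \<Longrightarrow> \<sigma> i = i"
  using permutes_not_in[OF pm] by auto

lemma mem_Ek: "(a,b) \<in> restr k (gr N \<sigma>) \<longleftrightarrow> 1 \<le> a \<and> a \<le> N \<and> b = \<sigma> a \<and> a \<le> k \<and> \<sigma> a \<le> k"
  unfolding restr_def gr_def using sS by auto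

lemma pinj_Ek: "k \<le> N \<Longrightarrow> pinj k (restr k (gr N \<sigma>))"
  unfolding pinj_def using mem_Ek sS by auto

lemma restr_Ek: "k \<le> k' \<Longrightarrow> restr k (restr k' (gr N \<sigma>)) = restr k (gr N \<sigma>)"
  unfolding restr_def by auto

lemma opo_Ek: "k \<le> N \<Longrightarrow> opo (k-1) (restr (k-1) (gr N \<sigma>)) = {a\<in>{1..k-1}. k \<le> \<sigma> a}"
  unfolding opo_def by (auto simp: image_iff mem_Ek Bex_def)

lemma opi_Ek: "k \<le> N \<Longrightarrow> opi (k-1) (restr (k-1) (gr N \<sigma>)) = {v\<in>{1..k-1}. k \<le> inv \<sigma> v}"
proof -
  assume k: "k \<le> N"
  have "snd ` restr (k-1) (gr N \<sigma>) = {v. 1 \<le> inv \<sigma> v \<and> inv \<sigma> v \<le> N \<and> inv \<sigma> v \<le> k-1 \<and> v \<le> k - 1}"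
    by (auto simp: image_iff mem_Ek Bex_def) (metis sinv(1))
  then show ?thesis unfolding opo_def opi_def using k iS by auto
qed


definition Ok where "Ok k = {a\<in>{1..k-1}. k \<le> \<sigma> a}"
definition Ik where "Ik k = {v\<in>{1..k-1}. k \<le> inv \<sigma> v}"
definition CU where "CU k = card {j\<in>{1..N}. inv \<sigma> k < j \<and> j \<le> k \<and> k < \<sigma> j}"
definition CL where "CL k = card {j\<in>{1..N}. \<sigma> k < \<sigma> j \<and> \<sigma> j < k \<and> k < j}"
definition NU where "NU k = card {i\<in>{1..N}. i < inv \<sigma> k \<and> inv \<sigma> k \<le> k \<and> k < \<sigma> i}"
definition NL where "NL k = card {j\<in>{1..N}. \<sigma> j < \<sigma> k \<and> \<sigma> k < k \<and> k < j}"
definition IA where "IA k = card {b\<in>{1..N}. k < b \<and> \<sigma> b < \<sigma> k \<and> \<sigma> b \<le> k}"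
definition IB where "IB k = card {a\<in>{1..N}. a < k \<and> a < inv \<sigma> k \<and> k < \<sigma> a}"

lemma card_s: "card (\<sigma> ` A) = card A"
  by (rule card_image[OF permutes_inj_on[OF pm]])

lemma card_reindex: "card {j\<in>{1..N}. P j} = card {v\<in>{1..N}. P (inv \<sigma> v)}"
proof -
  have "{j\<in>{1..N}. P j} = inv \<sigma> ` {v\<in>{1..N}. P (inv \<sigma> v)}"
  proof (rule set_eqI)
    fix j show "j \<in> {j\<in>{1..N}. P j} \<longleftrightarrow> j \<in> inv \<sigma> ` {v\<in>{1..N}. P (inv \<sigma> v)}"
    proof
      assume j: "j \<in> {j\<in>{1..N}. P j}"
      then have "\<sigma> j \<in> {v\<in>{1..N}. P (inv \<sigma> v)}" using sS[of j] by simp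
      then show "j \<in> inv \<sigma> ` {v\<in>{1..N}. P (inv \<sigma> v)}" by (rule rev_image_eqI) simp
    next
      assume "j \<in> inv \<sigma> ` {v\<in>{1..N}. P (inv \<sigma> v)}"
      then obtain v where v: "v \<in> {1..N}" "P (inv \<sigma> v)" "j = inv \<sigma> v" by blast
      then show "j \<in> {j\<in>{1..N}. P j}" using iS[of v] by simp
    qed
  qed
  moreover have "inj_on (inv \<sigma>) A" for A by (rule permutes_inj_on[OF permutes_inv[OF pm]])
  ultimately show ?thesis by (simp add: card_image)
qed

context
  fixes k assumes k: "1 \<le> k" "k \<le> N"
begin

private lemma nek: "\<And>x. x \<noteq> inv \<sigma> k \<Longrightarrow> \<sigma> x \<noteq> k" "\<And>v. v \<noteq> \<sigma> k \<Longrightarrow> inv \<sigma> v \<noteq> k"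
  using sinv by metis+

private lemma kS: "1 \<le> \<sigma> k \<and> \<sigma> k \<le> N" "1 \<le> inv \<sigma> k \<and> inv \<sigma> k \<le> N" using sS iS k by auto

lemma card_OI: "card (Ok k) = card (Ik k)"
  using card_opo_opi[OF pinj_Ek[of "k-1"]] k opo_Ek opi_Ek by (simp add: Ok_def Ik_def)

lemma c1: "(if inv \<sigma> k \<le> k \<and> inv \<sigma> k < k then abv (Ok k) (inv \<sigma> k) + (if \<sigma> k \<le> k then 0 else 1) else 0) = CU k"
proof (cases "inv \<sigma> k < k")
  case True
  have "{j\<in>{1..N}. inv \<sigma> k < j \<and> j \<le> k \<and> k < \<sigma> j} = {a\<in>Ok k. inv \<sigma> k < a} \<union> {j. j = k \<and> k < \<sigma> k}"
  proof (rule set_eqI)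
    fix x show "x \<in> {j\<in>{1..N}. inv \<sigma> k < j \<and> j \<le> k \<and> k < \<sigma> j} \<longleftrightarrow> x \<in> {a\<in>Ok k. inv \<sigma> k < a} \<union> {j. j = k \<and> k < \<sigma> k}"
      using k kS True nek(1)[of x] by (cases "x = k") (auto simp: Ok_def)
  qed
  moreover have "card ({a\<in>Ok k. inv \<sigma> k < a} \<union> {j. j = k \<and> k < \<sigma> k}) = card {a\<in>Ok k. inv \<sigma> k < a} + card {j. j = k \<and> k < \<sigma> k}"
    by (rule card_Un_disjoint) (auto simp: Ok_def)
  moreover have "card {j. j = k \<and> k < \<sigma> k} = (if \<sigma> k \<le> k then 0 else 1)" by auto
  ultimately show ?thesis using True by (simp add: CU_def abv_def)
next
  case False
  then have "{j\<in>{1..N}. inv \<sigma> k < j \<and> j \<le> k \<and> k < \<sigma> j} = {}" by auto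
  then show ?thesis using False by (simp add: CU_def)
qed

lemma c2: "(if \<sigma> k \<le> k \<and> \<sigma> k < k then abv (Ik k) (\<sigma> k) else 0) = CL k"
proof (cases "\<sigma> k < k")
  case True
  have "{v\<in>{1..N}. \<sigma> k < v \<and> v < k \<and> k < inv \<sigma> v} = {v\<in>Ik k. \<sigma> k < v}"
  proof (rule set_eqI)
    fix v show "v \<in> {v\<in>{1..N}. \<sigma> k < v \<and> v < k \<and> k < inv \<sigma> v} \<longleftrightarrow> v \<in> {v\<in>Ik k. \<sigma> k < v}"
      using k kS True nek(2)[of v] by (cases "v = \<sigma> k") (auto simp: Ik_def)
  qed
  moreover have "CL k = card {v\<in>{1..N}. \<sigma> k < v \<and> v < k \<and> k < inv \<sigma> v}"
    unfolding CL_def using card_reindex[of "\<lambda>j. \<sigma> k < \<sigma> j \<and> \<sigma> j < k \<and> k < j"] by simp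
  ultimately show ?thesis using True by (simp add: abv_def)
next
  case False
  then have "{j\<in>{1..N}. \<sigma> k < \<sigma> j \<and> \<sigma> j < k \<and> k < j} = {}" by auto
  then show ?thesis using False by (simp add: CL_def)
qed

lemma n1: "(if inv \<sigma> k \<le> k then blw (Ok k) (inv \<sigma> k) else 0) = NU k"
proof (cases "inv \<sigma> k \<le> k")
  case True
  have "{i\<in>{1..N}. i < inv \<sigma> k \<and> inv \<sigma> k \<le> k \<and> k < \<sigma> i} = {a\<in>Ok k. a < inv \<sigma> k}"
  proof (rule set_eqI)
    fix x show "x \<in> {i\<in>{1..N}. i < inv \<sigma> k \<and> inv \<sigma> k \<le> k \<and> k < \<sigma> i} \<longleftrightarrow> x \<in> {a\<in>Ok k. a < inv \<sigma> k}"
      using k kS True nek(1)[of x] by (cases "x = inv \<sigma> k") (auto simp: Ok_def)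
  qed
  then show ?thesis using True by (simp add: NU_def blw_def)
next
  case False
  then have "{i\<in>{1..N}. i < inv \<sigma> k \<and> inv \<sigma> k \<le> k \<and> k < \<sigma> i} = {}" by auto
  then show ?thesis using False by (simp add: NU_def)
qed

lemma n2: "(if \<sigma> k \<le> k \<and> \<sigma> k < k then blw (Ik k) (\<sigma> k) else 0) = NL k"
proof (cases "\<sigma> k < k")
  case True
  have "{v\<in>{1..N}. v < \<sigma> k \<and> \<sigma> k < k \<and> k < inv \<sigma> v} = {v\<in>Ik k. v < \<sigma> k}"
  proof (rule set_eqI)
    fix v show "v \<in> {v\<in>{1..N}. v < \<sigma> k \<and> \<sigma> k < k \<and> k < inv \<sigma> v} \<longleftrightarrow> v \<in> {v\<in>Ik k. v < \<sigma> k}"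
      using k kS True nek(2)[of v] by (cases "v = \<sigma> k") (auto simp: Ik_def)
  qed
  moreover have "NL k = card {v\<in>{1..N}. v < \<sigma> k \<and> \<sigma> k < k \<and> k < inv \<sigma> v}"
    unfolding NL_def using card_reindex[of "\<lambda>j. \<sigma> j < \<sigma> k \<and> \<sigma> k < k \<and> k < j"] by simp
  ultimately show ?thesis using True by (simp add: blw_def)
next
  case False
  then have "{j\<in>{1..N}. \<sigma> j < \<sigma> k \<and> \<sigma> k < k \<and> k < j} = {}" by auto
  then show ?thesis using False by (simp add: NL_def)
qed

lemma i1: "(if \<sigma> k \<le> k then blw (Ik k) (\<sigma> k) else card (Ok k) + (if inv \<sigma> k \<le> k then 0 else 1)) = IA k"
proof -
  have R: "IA k = card {v\<in>{1..N}. k < inv \<sigma> v \<and> v < \<sigma> k \<and> v \<le> k}"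
    unfolding IA_def using card_reindex[of "\<lambda>b. k < b \<and> \<sigma> b < \<sigma> k \<and> \<sigma> b \<le> k"] by simp
  show ?thesis
  proof (cases "\<sigma> k \<le> k")
    case True
    have "{v\<in>{1..N}. k < inv \<sigma> v \<and> v < \<sigma> k \<and> v \<le> k} = {v\<in>Ik k. v < \<sigma> k}"
    proof (rule set_eqI)
      fix v show "v \<in> {v\<in>{1..N}. k < inv \<sigma> v \<and> v < \<sigma> k \<and> v \<le> k} \<longleftrightarrow> v \<in> {v\<in>Ik k. v < \<sigma> k}"
        using k kS True nek(2)[of v] by (cases "v = \<sigma> k") (auto simp: Ik_def)
    qed
    then show ?thesis using True R by (simp add: blw_def)
  next
    case False
    have e: "{v\<in>{1..N}. k < inv \<sigma> v \<and> v < \<sigma> k \<and> v \<le> k} = Ik k \<union> {v. v = k \<and> k < inv \<sigma> k}"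
    proof (rule set_eqI)
      fix v show "v \<in> {v\<in>{1..N}. k < inv \<sigma> v \<and> v < \<sigma> k \<and> v \<le> k} \<longleftrightarrow> v \<in> Ik k \<union> {v. v = k \<and> k < inv \<sigma> k}"
        using k kS False nek(2)[of v] by (cases "v = k"; cases "v = \<sigma> k") (auto simp: Ik_def)
    qed
    have "card (Ik k \<union> {v. v = k \<and> k < inv \<sigma> k}) = card (Ik k) + card {v. v = k \<and> k < inv \<sigma> k}"
      by (rule card_Un_disjoint) (auto simp: Ik_def)
    moreover have "card {v. v = k \<and> k < inv \<sigma> k} = (if inv \<sigma> k \<le> k then 0 else 1)" by auto
    ultimately show ?thesis using False R e card_OI by simp
  qed
qed

lemma i2: "(if inv \<sigma> k \<le> k then blw (Ok k) (inv \<sigma> k) else card (Ok k)) = IB k"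
proof (cases "inv \<sigma> k \<le> k")
  case True
  have "{a\<in>{1..N}. a < k \<and> a < inv \<sigma> k \<and> k < \<sigma> a} = {a\<in>Ok k. a < inv \<sigma> k}"
  proof (rule set_eqI)
    fix x show "x \<in> {a\<in>{1..N}. a < k \<and> a < inv \<sigma> k \<and> k < \<sigma> a} \<longleftrightarrow> x \<in> {a\<in>Ok k. a < inv \<sigma> k}"
      using k kS True nek(1)[of x] by (cases "x = inv \<sigma> k") (auto simp: Ok_def)
  qed
  then show ?thesis using True by (simp add: IB_def blw_def)
next
  case False
  have "{a\<in>{1..N}. a < k \<and> a < inv \<sigma> k \<and> k < \<sigma> a} = Ok k"
  proof (rule set_eqI)
    fix x show "x \<in> {a\<in>{1..N}. a < k \<and> a < inv \<sigma> k \<and> k < \<sigma> a} \<longleftrightarrow> x \<in> Ok k"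
      using k kS False nek(1)[of x] by (cases "x = inv \<sigma> k") (auto simp: Ok_def)
  qed
  then show ?thesis using False by (simp add: IB_def)
qed

lemma loc_Ek: "loc x y q p s k (restr k (gr N \<sigma>)) = x^(if \<sigma> k < k then 0 else 1) * y^(if \<sigma> k = k then 1 else 0)
   * q^(CU k + CL k) * p^(NU k + NL k) * s^(IA k + IB k)"
proof -
  have HI: "(\<exists>i. (i,k) \<in> restr k (gr N \<sigma>)) = (inv \<sigma> k \<le> k)"
    using kS by (auto simp: mem_Ek seq_inv)
  have TI: "(THE i. (i,k) \<in> restr k (gr N \<sigma>)) = inv \<sigma> k" if "inv \<sigma> k \<le> k"
    using kS that by (intro the_equality) (auto simp: mem_Ek seq_inv)
  have HO: "(\<exists>j. (k,j) \<in> restr k (gr N \<sigma>)) = (\<sigma> k \<le> k)"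
    using k kS by (auto simp: mem_Ek)
  have TO: "(THE j. (k,j) \<in> restr k (gr N \<sigma>)) = \<sigma> k" if "\<sigma> k \<le> k"
    using k kS that by (intro the_equality) (auto simp: mem_Ek)
  have R: "restr (k-1) (restr k (gr N \<sigma>)) = restr (k-1) (gr N \<sigma>)" by (rule restr_Ek) simp
  have F: "((k,k) \<in> restr k (gr N \<sigma>)) = (\<sigma> k = k)" using k by (auto simp: mem_Ek)
  have Oeq: "opo (k-1) (restr (k-1) (gr N \<sigma>)) = Ok k" using opo_Ek k by (simp add: Ok_def)
  have Ieq: "opi (k-1) (restr (k-1) (gr N \<sigma>)) = Ik k" using opi_Ek k by (simp add: Ik_def)
  show ?thesis
    apply (subst loc_alt2[OF HI HO TI TO R F])
      apply assumption
     apply assumption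
    apply (simp only: Oeq Ieq c1 c2 n1 n2 i1 i2)
    apply simp
    done
qed

end
lemma card_filter1: "card {j\<in>{1..N}. P j} = (\<Sum>j\<in>{1..N}. if P j then 1 else 0)"
  unfolding card_eq_sum by (rule sum.inter_filter) simp

lemma card_pairs1: "card {(i,j). i\<in>{1..N} \<and> j\<in>{1..N} \<and> P i j} = (\<Sum>i\<in>{1..N}. \<Sum>j\<in>{1..N}. if P i j then 1 else 0)"
proof -
  have "{(i,j). i\<in>{1..N} \<and> j\<in>{1..N} \<and> P i j} = Sigma {1..N} (\<lambda>i. {j\<in>{1..N}. P i j})" by auto
  moreover have "card (Sigma {1..N} (\<lambda>i. {j\<in>{1..N}. P i j})) = (\<Sum>i\<in>{1..N}. card {j\<in>{1..N}. P i j})"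
    by (rule card_SigmaI) auto
  ultimately have "card {(i,j). i\<in>{1..N} \<and> j\<in>{1..N} \<and> P i j} = (\<Sum>i\<in>{1..N}. card {j\<in>{1..N}. P i j})"
    by simp
  then show ?thesis unfolding card_filter1 .
qed

lemma sum_reidx: "(\<Sum>k\<in>{1..N}. f k) = (\<Sum>i\<in>{1..N}. f (\<sigma> i))"
proof -
  have "(\<Sum>i\<in>{1..N}. f (\<sigma> i)) = sum f (\<sigma> ` {1..N})"
    by (rule sum.reindex[symmetric, unfolded comp_def]) (rule permutes_inj_on[OF pm])
  then show ?thesis using permutes_image[OF pm] by simp
qed

lemma T1: "(\<Sum>k\<in>{1..N}. (if \<sigma> k < k then 0 else 1::nat)) = wex N \<sigma>"
  unfolding wex_def card_filter1 by (intro sum.cong) auto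

lemma T2: "(\<Sum>k\<in>{1..N}. (if \<sigma> k = k then 1 else 0::nat)) = fixcount N \<sigma>"
  unfolding fixcount_def card_filter1 by simp

lemma T3: "(\<Sum>k\<in>{1..N}. CU k + CL k) = cros N \<sigma>"
proof -
  have "(\<Sum>k\<in>{1..N}. CU k) = (\<Sum>i\<in>{1..N}. CU (\<sigma> i))" by (rule sum_reidx)
  also have "\<dots> = (\<Sum>i\<in>{1..N}. \<Sum>j\<in>{1..N}. if i < j \<and> j \<le> \<sigma> i \<and> \<sigma> i < \<sigma> j then 1 else 0)"
    unfolding CU_def card_filter1 by simp
  finally have a: "(\<Sum>k\<in>{1..N}. CU k) = \<dots>" .
  have b: "(\<Sum>k\<in>{1..N}. CL k) = (\<Sum>i\<in>{1..N}. \<Sum>j\<in>{1..N}. if \<sigma> i < \<sigma> j \<and> \<sigma> j < i \<and> i < j then 1 else 0)"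
    unfolding CL_def card_filter1 by simp
  have "(\<Sum>k\<in>{1..N}. CU k + CL k) = (\<Sum>i\<in>{1..N}. \<Sum>j\<in>{1..N}.
      (if i < j \<and> j \<le> \<sigma> i \<and> \<sigma> i < \<sigma> j then 1 else 0) + (if \<sigma> i < \<sigma> j \<and> \<sigma> j < i \<and> i < j then 1 else 0))"
    unfolding sum.distrib a b ..
  also have "\<dots> = (\<Sum>i\<in>{1..N}. \<Sum>j\<in>{1..N}.
      (if (i < j \<and> j \<le> \<sigma> i \<and> \<sigma> i < \<sigma> j) \<or> (\<sigma> i < \<sigma> j \<and> \<sigma> j < i \<and> i < j) then 1 else 0))"
    by (intro sum.cong refl) auto
  also have "\<dots> = cros N \<sigma>" unfolding cros_def card_pairs1 ..
  finally show ?thesis .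
qed

lemma T4: "(\<Sum>k\<in>{1..N}. NU k + NL k) = nest N \<sigma>"
proof -
  have "(\<Sum>k\<in>{1..N}. NU k) = (\<Sum>j\<in>{1..N}. NU (\<sigma> j))" by (rule sum_reidx)
  also have "\<dots> = (\<Sum>j\<in>{1..N}. \<Sum>i\<in>{1..N}. if i < j \<and> j \<le> \<sigma> j \<and> \<sigma> j < \<sigma> i then 1 else 0)"
    unfolding NU_def card_filter1 by (intro sum.cong refl) auto
  also have "\<dots> = (\<Sum>i\<in>{1..N}. \<Sum>j\<in>{1..N}. if i < j \<and> j \<le> \<sigma> j \<and> \<sigma> j < \<sigma> i then 1 else 0)"
    by (rule sum.swap)
  finally have a: "(\<Sum>k\<in>{1..N}. NU k) = \<dots>" .
  have b: "(\<Sum>k\<in>{1..N}. NL k) = (\<Sum>i\<in>{1..N}. \<Sum>j\<in>{1..N}. if \<sigma> j < \<sigma> i \<and> \<sigma> i < i \<and> i < j then 1 else 0)"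
    unfolding NL_def card_filter1 by simp
  have "(\<Sum>k\<in>{1..N}. NU k + NL k) = (\<Sum>i\<in>{1..N}. \<Sum>j\<in>{1..N}.
      (if i < j \<and> j \<le> \<sigma> j \<and> \<sigma> j < \<sigma> i then 1 else 0) + (if \<sigma> j < \<sigma> i \<and> \<sigma> i < i \<and> i < j then 1 else 0))"
    unfolding sum.distrib a b ..
  also have "\<dots> = (\<Sum>i\<in>{1..N}. \<Sum>j\<in>{1..N}.
      (if (i < j \<and> j \<le> \<sigma> j \<and> \<sigma> j < \<sigma> i) \<or> (\<sigma> j < \<sigma> i \<and> \<sigma> i < i \<and> i < j) then 1 else 0))"
    by (intro sum.cong refl) auto
  also have "\<dots> = nest N \<sigma>" unfolding nest_def card_pairs1 ..
  finally show ?thesis .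
qed

lemma T5: "(\<Sum>k\<in>{1..N}. IA k + IB k) = invs N \<sigma>"
proof -
  have "(\<Sum>k\<in>{1..N}. IB k) = (\<Sum>b\<in>{1..N}. IB (\<sigma> b))" by (rule sum_reidx)
  also have "\<dots> = (\<Sum>b\<in>{1..N}. \<Sum>a\<in>{1..N}. if a < \<sigma> b \<and> a < b \<and> \<sigma> b < \<sigma> a then 1 else 0)"
    unfolding IB_def card_filter1 by (intro sum.cong refl) auto
  also have "\<dots> = (\<Sum>a\<in>{1..N}. \<Sum>b\<in>{1..N}. if a < \<sigma> b \<and> a < b \<and> \<sigma> b < \<sigma> a then 1 else 0)"
    by (rule sum.swap)
  finally have a: "(\<Sum>k\<in>{1..N}. IB k) = \<dots>" .
  have b: "(\<Sum>k\<in>{1..N}. IA k) = (\<Sum>a\<in>{1..N}. \<Sum>b\<in>{1..N}. if a < b \<and> \<sigma> b < \<sigma> a \<and> \<sigma> b \<le> a then 1 else 0)"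
    unfolding IA_def card_filter1 by simp
  have "(\<Sum>k\<in>{1..N}. IA k + IB k) = (\<Sum>a\<in>{1..N}. \<Sum>b\<in>{1..N}.
      (if a < b \<and> \<sigma> b < \<sigma> a \<and> \<sigma> b \<le> a then 1 else 0) + (if a < \<sigma> b \<and> a < b \<and> \<sigma> b < \<sigma> a then 1 else 0))"
    unfolding sum.distrib a b ..
  also have "\<dots> = (\<Sum>a\<in>{1..N}. \<Sum>b\<in>{1..N}. (if a < b \<and> \<sigma> a > \<sigma> b then 1 else 0))"
    by (intro sum.cong refl) auto
  also have "\<dots> = invs N \<sigma>" unfolding invs_def card_pairs1 ..
  finally show ?thesis .
qed

lemma prod_loc: "(\<Prod>k\<in>{1..N}. loc x y q p s k (restr k (gr N \<sigma>))) =
   x ^ wex N \<sigma> * y ^ fixcount N \<sigma> * q ^ cros N \<sigma> * p ^ nest N \<sigma> * s ^ invs N \<sigma>"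
proof -
  have "(\<Prod>k\<in>{1..N}. loc x y q p s k (restr k (gr N \<sigma>))) = (\<Prod>k\<in>{1..N}. x^(if \<sigma> k < k then 0 else 1) * y^(if \<sigma> k = k then 1 else 0)
   * q^(CU k + CL k) * p^(NU k + NL k) * s^(IA k + IB k))"
    by (intro prod.cong refl loc_Ek) auto
  also have "\<dots> = x ^ (\<Sum>k\<in>{1..N}. (if \<sigma> k < k then 0 else 1::nat)) * y ^ (\<Sum>k\<in>{1..N}. (if \<sigma> k = k then 1 else 0::nat))
     * q ^ (\<Sum>k\<in>{1..N}. CU k + CL k) * p ^ (\<Sum>k\<in>{1..N}. NU k + NL k) * s ^ (\<Sum>k\<in>{1..N}. IA k + IB k)"
    by (simp add: power_sum prod.distrib)
  also have "\<dots> = x ^ wex N \<sigma> * y ^ fixcount N \<sigma> * q ^ cros N \<sigma> * p ^ nest N \<sigma> * s ^ invs N \<sigma>"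
    unfolding T1 T2 T3 T4 T5 ..
  finally show ?thesis .
qed

end


lemma restr_restr: "k \<le> n \<Longrightarrow> restr k (restr n E) = restr k E" unfolding restr_def by auto
lemma restr_id: "E \<subseteq> {1..n}\<times>{1..n} \<Longrightarrow> restr n E = E" unfolding restr_def by auto

lemma WW_prod: "E \<subseteq> {1..n}\<times>{1..n} \<Longrightarrow> WW x y q p s n E = (\<Prod>k\<in>{1..n}. loc x y q p s k (restr k E))"
proof (induction n arbitrary: E)
  case 0 then show ?case by simp
next
  case (Suc n)
  have s1: "restr n E \<subseteq> {1..n}\<times>{1..n}" unfolding restr_def by auto
  have "WW x y q p s (Suc n) E = (\<Prod>k\<in>{1..n}. loc x y q p s k (restr k (restr n E))) * loc x y q p s (Suc n) E"
    using Suc.IH[OF s1] by simp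
  also have "(\<Prod>k\<in>{1..n}. loc x y q p s k (restr k (restr n E))) = (\<Prod>k\<in>{1..n}. loc x y q p s k (restr k E))"
    by (intro prod.cong refl) (simp add: restr_restr)
  also have "loc x y q p s (Suc n) E = loc x y q p s (Suc n) (restr (Suc n) E)" using restr_id[OF Suc.prems] by simp
  also have "(\<Prod>k\<in>{1..n}. loc x y q p s k (restr k E)) * loc x y q p s (Suc n) (restr (Suc n) E)
      = (\<Prod>k\<in>{1..Suc n}. loc x y q p s k (restr k E))"
    by (simp add: atLeastAtMostSuc_conv mult.commute)
  finally show ?case .
qed

definition tosig :: "nat \<Rightarrow> (nat\<times>nat) set \<Rightarrow> nat \<Rightarrow> nat" where
  "tosig N E = (\<lambda>i. if i \<in> {1..N} then (THE j. (i,j) \<in> E) else i)"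

lemma gr_in:
  assumes "\<sigma> permutes {1..N}"
  shows "gr N \<sigma> \<in> {E \<in> PA N. card (opo N E) = 0}"
proof -
  interpret pm N \<sigma> by unfold_locales (rule assms)
  have r: "restr N (gr N \<sigma>) = gr N \<sigma>" unfolding restr_def gr_def using sS by auto
  have "pinj N (gr N \<sigma>)" using pinj_Ek[of N] r by simp
  moreover have "opo N (gr N \<sigma>) = {}" unfolding opo_def gr_def by (auto simp: image_iff)
  ultimately show ?thesis by (simp add: PA_def)
qed

lemma tosig_gr:
  assumes "\<sigma> permutes {1..N}"
  shows "tosig N (gr N \<sigma>) = \<sigma>"
proof
  interpret pm N \<sigma> by unfold_locales (rule assms)
  fix i show "tosig N (gr N \<sigma>) i = \<sigma> i"
  proof (cases "i \<in> {1..N}")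
    case True
    then have "(THE j. (i,j) \<in> gr N \<sigma>) = \<sigma> i" by (intro the_equality) (auto simp: gr_def)
    then show ?thesis using True by (simp add: tosig_def)
  next
    case False then show ?thesis using sout by (auto simp: tosig_def)
  qed
qed

context
  fixes N E assumes E: "E \<in> {E \<in> PA N. card (opo N E) = 0}"
begin

private lemma pE: "pinj N E" using E by (simp add: PA_def)
private lemma sub: "E \<subseteq> {1..N}\<times>{1..N}" using pE unfolding pinj_def by blast
private lemma fu: "(i,j)\<in>E \<Longrightarrow> (i,j')\<in>E \<Longrightarrow> j = j'" using pE unfolding pinj_def by blast
private lemma iu: "(i,j)\<in>E \<Longrightarrow> (i',j)\<in>E \<Longrightarrow> i = i'" using pE unfolding pinj_def by blast
private lemma tot: "i \<in> {1..N} \<Longrightarrow> \<exists>j. (i,j) \<in> E"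
proof -
  assume i: "i \<in> {1..N}"
  have "opo N E = {}" using E opo_fin[of N E] by simp
  then show ?thesis using i unfolding opo_def by force
qed
private lemma sur: "v \<in> {1..N} \<Longrightarrow> \<exists>i. (i,v) \<in> E"
proof -
  assume v: "v \<in> {1..N}"
  have "card (opi N E) = 0" using E card_opo_opi[OF pE] by simp
  then have "opi N E = {}" using opo_fin(2)[of N E] by simp
  then show ?thesis using v unfolding opi_def by force
qed
private lemma the_t: "(i,j) \<in> E \<Longrightarrow> (THE j. (i,j) \<in> E) = j" using fu by blast

lemma gr_tosig: "gr N (tosig N E) = E"
proof
  show "gr N (tosig N E) \<subseteq> E"
  proof
    fix pr assume "pr \<in> gr N (tosig N E)"
    then obtain i where i: "i \<in> {1..N}" "pr = (i, tosig N E i)" by (auto simp: gr_def)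
    obtain j where j: "(i,j) \<in> E" using tot[OF i(1)] by blast
    show "pr \<in> E" using i j the_t[OF j] by (simp add: tosig_def)
  qed
  show "E \<subseteq> gr N (tosig N E)"
  proof
    fix pr assume pr: "pr \<in> E"
    obtain i j where ij: "pr = (i,j)" by (cases pr)
    have i: "i \<in> {1..N}" using sub pr ij by auto
    show "pr \<in> gr N (tosig N E)" unfolding gr_def using i pr ij the_t[of i j] by (force simp: tosig_def)
  qed
qed

lemma tosig_perm: "tosig N E permutes {1..N}"
proof (rule bij_imp_permutes)
  show "bij_betw (tosig N E) {1..N} {1..N}"
    unfolding bij_betw_def
  proof
    show "inj_on (tosig N E) {1..N}"
    proof
      fix a b assume a: "a \<in> {1..N}" and b: "b \<in> {1..N}" and eq: "tosig N E a = tosig N E b"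
      obtain ja where ja: "(a,ja) \<in> E" using tot[OF a] by blast
      obtain jb where jb: "(b,jb) \<in> E" using tot[OF b] by blast
      show "a = b" using eq a b the_t[OF ja] the_t[OF jb] ja jb iu by (simp add: tosig_def)
    qed
    show "tosig N E ` {1..N} = {1..N}"
    proof
      show "tosig N E ` {1..N} \<subseteq> {1..N}"
      proof
        fix v assume "v \<in> tosig N E ` {1..N}"
        then obtain a where a: "a \<in> {1..N}" "v = tosig N E a" by blast
        obtain j where j: "(a,j) \<in> E" using tot[OF a(1)] by blast
        show "v \<in> {1..N}" using a j the_t[OF j] sub by (auto simp: tosig_def)
      qed
      show "{1..N} \<subseteq> tosig N E ` {1..N}"
      proof
        fix v assume v: "v \<in> {1..N}"
        obtain i where i: "(i,v) \<in> E" using sur[OF v] by blast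
        have "i \<in> {1..N}" using i sub by auto
        moreover have "tosig N E i = v" using i the_t[OF i] \<open>i \<in> {1..N}\<close> by (simp add: tosig_def)
        ultimately show "v \<in> tosig N E ` {1..N}" by (metis image_eqI)
      qed
    qed
  qed
  show "\<And>x. x \<notin> {1..N} \<Longrightarrow> tosig N E x = x" unfolding tosig_def by auto
qed

end

lemma A_GG: "A_poly N x y q p s = GG x y q p s N 0"
proof -
  have "GG x y q p s N 0 = (\<Sum>E\<in>{E \<in> PA N. card (opo N E) = 0}. WW x y q p s N E)"
    unfolding GG_def by (rule sum.inter_filter[symmetric]) (rule PA_fin)
  also have "A_poly N x y q p s = (\<Sum>E\<in>{E \<in> PA N. card (opo N E) = 0}. WW x y q p s N E)"
    unfolding A_poly_def
  proof (rule sum.reindex_bij_witness[where i="tosig N" and j="gr N"])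
    fix \<sigma> assume "\<sigma> \<in> {\<sigma>. \<sigma> permutes {1..N}}"
    then have s: "\<sigma> permutes {1..N}" by simp
    interpret pm N \<sigma> by unfold_locales (rule s)
    show "tosig N (gr N \<sigma>) = \<sigma>" by (rule tosig_gr[OF s])
    show "gr N \<sigma> \<in> {E \<in> PA N. card (opo N E) = 0}" by (rule gr_in[OF s])
    have sub: "gr N \<sigma> \<subseteq> {1..N}\<times>{1..N}" unfolding gr_def using sS by auto
    show "WW x y q p s N (gr N \<sigma>) = x ^ wex N \<sigma> * y ^ fixcount N \<sigma> * q ^ cros N \<sigma> * p ^ nest N \<sigma> * s ^ invs N \<sigma>"
      unfolding WW_prod[OF sub] by (rule prod_loc)
  next
    fix E assume E: "E \<in> {E \<in> PA N. card (opo N E) = 0}"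
    show "gr N (tosig N E) = E" by (rule gr_tosig[OF E])
    show "tosig N E \<in> {\<sigma>. \<sigma> permutes {1..N}}" using tosig_perm[OF E] by simp
  qed
  ultimately show ?thesis by simp
qed

lemma jfrac_cong: "(\<And>k. a k * c (Suc k) = a' k * c' (Suc k)) \<Longrightarrow> jfrac a b c m k = jfrac a' b c' m k"
  by (induction m arbitrary: k) simp_all

theorem theorem4p1:
  fixes x y q p s :: "'a::field"
  defines "a \<equiv> (\<lambda>h. x * s ^ (2 * h + 1) * qint (h + 1) q (p * s))"
      and "b \<equiv> (\<lambda>h. x * y * p ^ h * s ^ (2 * h) + (1 + x * q) * s ^ h * qint h q (p * s))"
      and "c \<equiv> (\<lambda>h. qint h q (p * s))"
  shows "(\<lambda>m. jfrac a b c m 0) \<longlonglongrightarrow>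
           Abs_fps (\<lambda>n. if n = 0 then 1 else A_poly n x y q p s)"
proof (rule tendsto_fpsI)
  fix n
  have bb: "b = be x y q p s" unfolding b_def be_def by (rule ext) simp
  have J: "jfrac a b c m 0 = jfrac (al x s) (be x y q p s) (ga q p s) m 0" for m
    unfolding bb by (rule jfrac_cong) (simp add: a_def c_def al_def ga_def mult_ac)
  show "eventually (\<lambda>m. fps_nth (jfrac a b c m 0) n = fps_nth (Abs_fps (\<lambda>n. if n = 0 then 1 else A_poly n x y q p s)) n) sequentially"
    unfolding eventually_sequentially
  proof (intro exI allI impI)
    fix m assume m: "Suc n \<le> m"
    have "fps_nth (jfrac a b c m 0) n = fps_nth (XX (al x s) (be x y q p s) (ga q p s) m 0) n"
      using XX_0[of m "al x s" "be x y q p s" "ga q p s"] m J by simp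
    also have "\<dots> = TT (al x s) (be x y q p s) (ga q p s) m n 0" by (simp add: XX_def)
    also have "\<dots> = GG x y q p s n 0" using GG_TT[of n 0 m x y q p s] m by simp
    also have "\<dots> = (if n = 0 then 1 else A_poly n x y q p s)" using A_GG[of n x y q p s] GG_0[of x y q p s 0] by (cases "n = 0") simp_all
    finally show "fps_nth (jfrac a b c m 0) n = fps_nth (Abs_fps (\<lambda>n. if n = 0 then 1 else A_poly n x y q p s)) n" by simp
  qed
qed


end
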